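(* Let $V=\bigoplus_{j\in\mathbb{Z}}V_j$ be an irreducible quasifinite $W$-module which has neither a highest weight vector nor a lowest weight vector. Then for all $i,j\in\mathbb{Z}$ with $i\neq0,-1$, the linear map $$V_j\to V_{i+j}\oplus V_{i+j+1}\oplus V_{i+j},\qquad v\mapsto\big((t^iD)v,\,(t^{i+1}D)v,\,(t^iD^2)v\big)$$ is injective. In particular, $\dim V_j\le 2\dim V_0+\dim V_1$ for all $j\in\mathbb{Z}$.
   Context: Let $\mathbb{F}$ be an algebraically closed field of characteristic zero, and let $W=\mathcal{W}(\mathbb{Z},1)^{(1)}=\mathrm{span}\{t^iD^j\mid i\in\mathbb{Z},\,j\ge1\}$. The Lie bracket is $$[t^iDf(D),t^jDg(D)]=t^{i+j}D\big((D+j)f(D+j)g(D)-(D+i)g(D+i)f(D)\big)$$ for $f,g\in\mathbb{F}[D]$. The algebra is $\mathbb{Z}$-graded by $W_i=\{t^iDf(D)\mid f\in\mathbb{F}[D]\}$. Let $W_+=\bigoplus_{i>0}W_i$ and $W_-=\bigoplus_{i<0}W_i$; note that $W_0$ is commutative. A $W$-module $V$ is quasifinite if $V=\bigoplus_{j\in\mathbb{Z}}V_j$ with $W_iV_j\subset V_{i+j}$ and $\dim V_j<\infty$ for all $i,j$. A highest (resp. lowest) weight vector is a nonzero homogeneous vector $v$ that is a common eigenvector of $W_0$ and satisfies $W_+v=0$ (resp. $W_-v=0$). *)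

theory Defs
  imports Main "HOL-Computational_Algebra.Polynomial"
begin

text \<open>The Lie algebra W = span{t^i D^j | i in Z, j >= 1}; its elements are finite sums of
  elements t^i D f(D) with f a polynomial. A representation is given by
  rho i f = action of t^i D f(D).\<close>

text \<open>The polynomial h with [t^i D f(D), t^j D g(D)] = t^(i+j) D h(D).\<close>
definition W_bracket_poly :: "int \<Rightarrow> 'a::comm_ring_1 poly \<Rightarrow> int \<Rightarrow> 'a poly \<Rightarrow> 'a poly" where
  "W_bracket_poly i f j g =
     [:of_int j, 1:] * pcompose f [:of_int j, 1:] * g
   - [:of_int i, 1:] * pcompose g [:of_int i, 1:] * f"

definition W_module :: "('a::field \<Rightarrow> 'v::ab_group_add \<Rightarrow> 'v)
    \<Rightarrow> (int \<Rightarrow> 'a poly \<Rightarrow> 'v \<Rightarrow> 'v) \<Rightarrow> bool" where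
  "W_module scale rho \<longleftrightarrow>
     vector_space scale \<and>
     (\<forall>i f v w. rho i f (v + w) = rho i f v + rho i f w) \<and>
     (\<forall>i f c v. rho i f (scale c v) = scale c (rho i f v)) \<and>
     (\<forall>i f g v. rho i (f + g) v = rho i f v + rho i g v) \<and>
     (\<forall>i f c v. rho i (smult c f) v = scale c (rho i f v)) \<and>
     (\<forall>i j f g v. rho i f (rho j g v) - rho j g (rho i f v)
                    = rho (i + j) (W_bracket_poly i f j g) v)"

definition fin_dim_subspace :: "('a::field \<Rightarrow> 'v::ab_group_add \<Rightarrow> 'v) \<Rightarrow> 'v set \<Rightarrow> bool" where
  "fin_dim_subspace scale U \<longleftrightarrow>
     module.subspace scale U \<and> (\<exists>B. finite B \<and> B \<subseteq> U \<and> module.span scale B = U)"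

definition quasifinite :: "('a::field \<Rightarrow> 'v::ab_group_add \<Rightarrow> 'v)
    \<Rightarrow> (int \<Rightarrow> 'a poly \<Rightarrow> 'v \<Rightarrow> 'v) \<Rightarrow> (int \<Rightarrow> 'v set) \<Rightarrow> bool" where
  "quasifinite scale rho Vg \<longleftrightarrow>
     (\<forall>j. fin_dim_subspace scale (Vg j)) \<and>
     (\<forall>v. \<exists>!c :: int \<Rightarrow> 'v. finite {j. c j \<noteq> 0} \<and> (\<forall>j. c j \<in> Vg j)
            \<and> v = sum c {j. c j \<noteq> 0}) \<and>
     (\<forall>i j f v. v \<in> Vg j \<longrightarrow> rho i f v \<in> Vg (i + j))"

definition W_irreducible :: "('a::field \<Rightarrow> 'v::ab_group_add \<Rightarrow> 'v)
    \<Rightarrow> (int \<Rightarrow> 'a poly \<Rightarrow> 'v \<Rightarrow> 'v) \<Rightarrow> bool" where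
  "W_irreducible scale rho \<longleftrightarrow>
     (\<exists>v::'v. v \<noteq> 0) \<and>
     (\<forall>U. module.subspace scale U \<and> (\<forall>i f u. u \<in> U \<longrightarrow> rho i f u \<in> U)
          \<longrightarrow> U = {0} \<or> U = UNIV)"

definition highest_weight_vector :: "('a::field \<Rightarrow> 'v::ab_group_add \<Rightarrow> 'v)
    \<Rightarrow> (int \<Rightarrow> 'a poly \<Rightarrow> 'v \<Rightarrow> 'v) \<Rightarrow> (int \<Rightarrow> 'v set) \<Rightarrow> 'v \<Rightarrow> bool" where
  "highest_weight_vector scale rho Vg v \<longleftrightarrow>
     v \<noteq> 0 \<and> (\<exists>j. v \<in> Vg j) \<and> (\<forall>f. \<exists>c. rho 0 f v = scale c v) \<and>
     (\<forall>i f. i > 0 \<longrightarrow> rho i f v = 0)"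

definition lowest_weight_vector :: "('a::field \<Rightarrow> 'v::ab_group_add \<Rightarrow> 'v)
    \<Rightarrow> (int \<Rightarrow> 'a poly \<Rightarrow> 'v \<Rightarrow> 'v) \<Rightarrow> (int \<Rightarrow> 'v set) \<Rightarrow> 'v \<Rightarrow> bool" where
  "lowest_weight_vector scale rho Vg v \<longleftrightarrow>
     v \<noteq> 0 \<and> (\<exists>j. v \<in> Vg j) \<and> (\<forall>f. \<exists>c. rho 0 f v = scale c v) \<and>
     (\<forall>i f. i < 0 \<longrightarrow> rho i f v = 0)"

end

theory Submission
  imports Defs "HOL-Library.Product_Plus"
begin

definition Lop :: "'a::comm_ring_1 \<Rightarrow> 'a \<Rightarrow> 'a poly \<Rightarrow> 'a poly" where
  "Lop b c f = [:b,1:] * pcompose f [:b,1:] - [:c,1:] * f"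

lemma lin_mult: "[:b,1:] * R = smult b R + pCons 0 (R::'a::comm_ring_1 poly)"
  by (simp add: mult_pCons_left)

lemma shift_diff:
  fixes p :: "'a::comm_ring_1 poly"
  shows "degree p \<le> Suc n \<Longrightarrow> degree (pcompose p [:b,1:] - p) \<le> n \<and>
     coeff (pcompose p [:b,1:] - p) n = of_nat (Suc n) * b * coeff p (Suc n)"
proof (induction p arbitrary: n)
  case 0
  then show ?case by simp
next
  case (pCons c r)
  have pc: "pCons c r = [:c:] + pCons 0 r" by simp
  have eq: "pcompose (pCons c r) [:b,1:] - pCons c r = pCons 0 (pcompose r [:b,1:] - r) + smult b (pcompose r [:b,1:])"
  proof -
    have h: "pcompose (pCons c r) [:b,1:] = [:c:] + smult b (pcompose r [:b,1:]) + pCons 0 (pcompose r [:b,1:])"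
      by (simp only: pcompose_pCons lin_mult add.assoc)
    have m: "pCons 0 (pcompose r [:b,1:] - r) = pCons 0 (pcompose r [:b,1:]) - pCons 0 r" by simp
    show ?thesis unfolding h m by (subst pc) (simp add: algebra_simps)
  qed
  have dr: "degree r \<le> n" using pCons.prems
    by (cases "r = 0") auto
  have dcomp: "degree (pcompose r [:b,1:]) \<le> n" using dr degree_pcompose_le[of r "[:b,1:]"] by simp
  show ?case
  proof (cases n)
    case 0
    then have "degree r = 0" using dr by simp
    then obtain a where r: "r = [:a:]" by (metis degree_eq_zeroE)
    show ?thesis unfolding eq using 0 r by simp
  next
    case (Suc m)
    from pCons.IH[of m] dr Suc have ih: "degree (pcompose r [:b,1:] - r) \<le> m"
      "coeff (pcompose r [:b,1:] - r) m = of_nat (Suc m) * b * coeff r (Suc m)" by auto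
    have c0: "coeff (pcompose r [:b,1:]) n = coeff r n"
    proof -
      have "coeff (pcompose r [:b,1:] - r) n = 0" using ih(1) Suc by (intro coeff_eq_0) simp
      then show ?thesis by (simp only: coeff_diff right_minus_eq)
    qed
    have deg: "degree (pcompose (pCons c r) [:b,1:] - pCons c r) \<le> n"
      unfolding eq using ih Suc dcomp
      by (intro degree_add_le) (auto simp: degree_pCons_eq_if intro: order_trans[OF degree_smult_le])
    have "coeff (pcompose (pCons c r) [:b,1:] - pCons c r) n = of_nat (Suc n) * b * coeff r n"
      unfolding eq using ih Suc c0 by (simp add: algebra_simps)
    then show ?thesis using deg by simp
  qed
qed

lemma Lop_deg:
  fixes f :: "'a::comm_ring_1 poly"
  assumes "degree f \<le> n"
  shows "degree (Lop b c f) \<le> n \<and> coeff (Lop b c f) n = (of_nat (Suc n) * b - c) * coeff f n"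
proof -
  define q where "q = pCons 0 f"
  have pq: "pcompose q [:b,1:] = [:b,1:] * pcompose f [:b,1:]"
    unfolding q_def by (simp add: pcompose_pCons)
  have cf: "[:c,1:] * f = smult c f + q" unfolding q_def by (rule lin_mult)
  have L: "Lop b c f = (pcompose q [:b,1:] - q) - smult c f"
    unfolding Lop_def pq cf by (simp add: algebra_simps)
  have dq: "degree q \<le> Suc n" unfolding q_def using assms by (cases "f = 0") auto
  from shift_diff[OF dq, of b] have h: "degree (pcompose q [:b,1:] - q) \<le> n"
    "coeff (pcompose q [:b,1:] - q) n = of_nat (Suc n) * b * coeff q (Suc n)" by auto
  have "degree (Lop b c f) \<le> n" unfolding L
    by (rule degree_diff_le[OF h(1)]) (rule order_trans[OF degree_smult_le assms])
  moreover have "coeff (Lop b c f) n = (of_nat (Suc n) * b - c) * coeff f n"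
    unfolding L using h(2) by (simp add: q_def algebra_simps)
  ultimately show ?thesis by simp
qed

lemma br_1: "W_bracket_poly a f b 1 = Lop (of_int b) (of_int a) f"
  by (simp only: W_bracket_poly_def Lop_def pcompose_1 mult_1_right mult_1_left)
lemma br_1left: "W_bracket_poly p 1 q g = - Lop (of_int p) (of_int q) g"
  by (simp only: W_bracket_poly_def Lop_def pcompose_1 mult_1_right mult_1_left minus_diff_eq)
lemma br_X: "W_bracket_poly a f b [:0,1:] =
   pCons 0 (Lop (of_int b) (of_int a) f) - smult (of_int a) ([:of_int a,1:] * (f::'a::comm_ring_1 poly))"
proof -
  define G where "G = [:of_int b,1:] * pcompose f [:of_int b,1:]"
  define H where "H = [:of_int a,1:] * f"
  have x: "pcompose [:0,1:] [:of_int a,1:] = ([:of_int a,1:] :: 'a poly)" by (simp add: pcompose_pCons)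
  have g: "G * [:0,1:] = pCons 0 G" by (simp add: mult_pCons_right)
  have l: "W_bracket_poly a f b [:0,1:] = G * [:0,1:] - [:of_int a,1:] * H"
    unfolding W_bracket_poly_def x G_def H_def by (simp only: mult.assoc)
  have r: "pCons 0 (Lop (of_int b) (of_int a) f) = pCons 0 G - pCons 0 H"
    unfolding Lop_def G_def H_def by simp
  show ?thesis unfolding l r g H_def[symmetric] lin_mult[of "of_int a" H] by simp
qed

lemma br_11: "W_bracket_poly a 1 b 1 = smult (of_int (b - a)) (1::'a::comm_ring_1 poly)"
proof -
  have "W_bracket_poly a 1 b 1 = [:of_int b,1:] - ([:of_int a,1:] :: 'a poly)"
    by (simp only: br_1 Lop_def pcompose_1 mult_1_right)
  also have "\<dots> = [:of_int (b - a):]" by simp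
  also have "\<dots> = smult (of_int (b - a)) 1" by simp
  finally show ?thesis .
qed
lemma br_X1: "W_bracket_poly a [:0,1:] b 1 =
   smult (of_int b ^ 2) 1 + smult (of_int (2*b - a)) ([:0,1:]::'a::comm_ring_1 poly)"
proof -
  have "W_bracket_poly a [:0,1:] b 1 = [:of_int b,1:] * [:of_int b,1:] - [:of_int a,1:] * ([:0,1:] :: 'a poly)"
    by (simp only: br_1 Lop_def pcompose_pCons pcompose_0 mult_0_right add_0_right) simp
  also have "\<dots> = [:of_int b ^ 2, of_int (2*b - a):]" by (simp add: algebra_simps power2_eq_square)
  also have "\<dots> = smult (of_int b ^ 2) 1 + smult (of_int (2*b - a)) [:0,1:]" by simp
  finally show ?thesis .
qed
lemma br_00: "W_bracket_poly 0 f 0 g = (0::'a::comm_ring_1 poly)"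
  by (simp add: W_bracket_poly_def mult.commute)lemma all_degrees:
  fixes P :: "'a::field poly \<Rightarrow> bool"
  assumes P0: "P 0" and Padd: "\<And>f g. P f \<Longrightarrow> P g \<Longrightarrow> P (f + g)"
    and Psm: "\<And>c f. P f \<Longrightarrow> P (smult c f)"
    and deg: "\<And>n. \<exists>f. P f \<and> f \<noteq> 0 \<and> degree f = n"
  shows "P h"
proof (induction "degree h" arbitrary: h rule: less_induct)
  case less
  show ?case
  proof (cases "h = 0")
    case True then show ?thesis using P0 by simp
  next
    case False
    obtain f where f: "P f" "f \<noteq> 0" "degree f = degree h" using deg by blast
    define g where "g = h - smult (lead_coeff h / lead_coeff f) f"
    have lf: "lead_coeff f \<noteq> 0" by (metis f(2) leading_coeff_0_iff)
    have cg: "coeff g (degree h) = 0" unfolding g_def using lf f(3) by simp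
    have dg: "degree g \<le> degree h" unfolding g_def using f(3)
      by (intro degree_diff_le) (auto intro: order_trans[OF degree_smult_le])
    have Pg: "P g"
    proof (cases "g = 0")
      case True then show ?thesis using P0 by simp
    next
      case False
      then have "degree g \<noteq> degree h" using cg by (metis leading_coeff_0_iff)
      then have "degree g < degree h" using dg by simp
      then show ?thesis using less by simp
    qed
    have "h = g + smult (lead_coeff h / lead_coeff f) f" unfolding g_def by simp
    then show ?thesis using Padd[OF Pg Psm[OF f(1)]] by metis
  qed
qed

locale wmod =
  fixes scale :: "'a::{alg_closed_field, field_char_0} \<Rightarrow> 'v::ab_group_add \<Rightarrow> 'v"
    and rho :: "int \<Rightarrow> 'a poly \<Rightarrow> 'v \<Rightarrow> 'v"
    and Vg :: "int \<Rightarrow> 'v set"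
  assumes vs: "vector_space scale"
    and add_v: "rho i f (v + w) = rho i f v + rho i f w"
    and scale_v: "rho i f (scale c v) = scale c (rho i f v)"
    and add_f: "rho i (f + g) v = rho i f v + rho i g v"
    and smult_f: "rho i (smult c f) v = scale c (rho i f v)"
    and brk: "rho i f (rho j g v) - rho j g (rho i f v) = rho (i + j) (W_bracket_poly i f j g) v"
    and sub: "module.subspace scale (Vg j)"
    and fin: "\<exists>B. finite B \<and> B \<subseteq> Vg j \<and> module.span scale B = Vg j"
    and grade: "v \<in> Vg j \<Longrightarrow> rho i f v \<in> Vg (i + j)"
begin

sublocale V: vector_space scale by (rule vs)

lemma hom: "module_hom scale scale (rho i f)"
  by (simp add: module_hom_iff V.module_axioms add_v scale_v)

lemma rho_0v[simp]: "rho i f 0 = 0"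
  using module_hom.zero[OF hom] .

lemma rho_diff_v: "rho i f (x - y) = rho i f x - rho i f y"
  using module_hom.diff[OF hom] .

lemma rho_0f[simp]: "rho i 0 v = 0"
  using smult_f[of i 0 0 v] by simp

lemma rho_neg_f: "rho i (- f) v = - rho i f v"
proof -
  have "rho i (- f) v = rho i (smult (-1) f) v" by simp
  also have "\<dots> = scale (-1) (rho i f v)" by (rule smult_f)
  also have "\<dots> = - rho i f v" by (simp add: V.scale_minus_left)
  finally show ?thesis .
qed

lemma rho_diff_f: "rho i (f - g) v = rho i f v - rho i g v"
  using add_f[of i f "- g" v] rho_neg_f[of i g v] by simp

lemma rho_sum_f: "rho i (sum F S) v = (\<Sum>x\<in>S. rho i (F x) v)"
  by (induction S rule: infinite_finite_induct) (auto simp: add_f)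

lemma brk': "rho i f (rho j g v) = rho j g (rho i f v) + rho (i + j) (W_bracket_poly i f j g) v"
  using brk[of i f j g v] by (simp add: algebra_simps)

lemma kill_close:
  assumes "rho a f v = 0" "rho b g v = 0"
  shows "rho (a + b) (W_bracket_poly a f b g) v = 0"
  using brk[of a f b g v] assms by simp

lemma Vg0: "0 \<in> Vg j" using V.subspace_0[OF sub] .
lemma Vg_diff: "x \<in> Vg j \<Longrightarrow> y \<in> Vg j \<Longrightarrow> x - y \<in> Vg j" using V.subspace_diff[OF sub] by blast

lemma of_int_ne0: "(of_int z :: 'a) \<noteq> 0 \<longleftrightarrow> z \<noteq> 0" by simp

lemma scale_int_cancel:
  assumes "scale (of_int z) x = 0" "z \<noteq> 0" shows "x = 0"
  using assms by (metis V.scale_eq_0_iff of_int_eq_0_iff)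

lemma Lop_coeff_int: "(of_nat m * of_int b - of_int a :: 'a) = of_int (int m * b - a)"
  by simp

end

context wmod begin

lemma witt_close:
  assumes "rho a 1 v = 0" "rho b 1 v = 0" "a \<noteq> b"
  shows "rho (a + b) 1 v = 0"
proof -
  have "rho (a + b) (W_bracket_poly a 1 b 1) v = 0" by (rule kill_close[OF assms(1,2)])
  then have "scale (of_int (b - a)) (rho (a + b) 1 v) = 0" by (simp only: br_11 smult_f)
  moreover have "b - a \<noteq> 0" using assms(3) by simp
  ultimately show ?thesis by (rule scale_int_cancel)
qed

lemma witt_gen:
  assumes k: "k \<ge> 1" and h1: "rho k 1 v = 0" and h2: "rho (k + 1) 1 v = 0"
  shows "\<forall>l \<ge> k * k + k + 1. rho l 1 v = 0"
proof -
  have P: "\<forall>t. 1 \<le> t \<and> t \<le> r - 1 \<longrightarrow> rho (r * k + t) 1 v = 0" if r: "r \<ge> 2" for r :: int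
    using r
  proof (induction r rule: int_ge_induct)
    case base
    have "rho (k + (k + 1)) 1 v = 0" using witt_close[OF h1 h2] by simp
    then show ?case by (auto simp: algebra_simps)
  next
    case (step r)
    show ?case
    proof (intro allI impI)
      fix t assume t: "1 \<le> t \<and> t \<le> r + 1 - 1"
      show "rho ((r + 1) * k + t) 1 v = 0"
      proof (cases "t \<le> r - 1")
        case True
        have a: "rho (r * k + t) 1 v = 0" using step.IH True t by auto
        have ne: "k \<noteq> r * k + t"
        proof -
          have "r * k \<ge> 2 * k" using step.hyps k by (intro mult_right_mono) auto
          then show ?thesis using t k by linarith
        qed
        have "rho (k + (r * k + t)) 1 v = 0" by (rule witt_close[OF h1 a ne])
        then show ?thesis by (simp add: algebra_simps)
      next
        case False
        then have tr: "t = r" using t by linarith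
        have a: "rho (r * k + (r - 1)) 1 v = 0" using step.IH step.hyps by auto
        have ne: "k + 1 \<noteq> r * k + (r - 1)"
        proof -
          have "r * k \<ge> 2 * k" using step.hyps k by (intro mult_right_mono) auto
          then show ?thesis using step.hyps k by linarith
        qed
        have "rho ((k + 1) + (r * k + (r - 1))) 1 v = 0" by (rule witt_close[OF h2 a ne])
        then show ?thesis using tr by (simp add: algebra_simps)
      qed
    qed
  qed
  show ?thesis
  proof (intro allI impI)
    fix l assume l: "k * k + k + 1 \<le> l"
    define r where "r = (l - 1) div k"
    define s where "s = (l - 1) mod k"
    have ld: "l - 1 = r * k + s" unfolding r_def s_def by simp
    have s0: "0 \<le> s" "s < k" unfolding s_def using k by auto
    have "r * k > k * k" using ld s0 l by linarith
    then have rk: "r > k" using k by (simp add: mult_less_cancel_right)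
    have "rho (r * k + (s + 1)) 1 v = 0" using P[of r] rk k s0 by auto
    then show "rho l 1 v = 0" using ld by (simp add: algebra_simps)
  qed
qed

lemma X_gen:
  assumes k: "k \<ge> 1" and a0: "a0 \<ge> 1" and wg: "\<forall>l \<ge> k * k + k + 1. rho l 1 v = 0"
    and hX: "rho a0 [:0,1:] v = 0"
  shows "\<forall>l \<ge> 2 * a0 + k * k + k + 2. rho l [:0,1:] v = 0"
proof (intro allI impI)
  fix l assume l: "2 * a0 + k * k + k + 2 \<le> l"
  define b where "b = l - a0"
  have "b \<ge> k * k + k + 1" using l a0 b_def by linarith
  then have b1: "rho b 1 v = 0" using wg by auto
  have l1: "rho l 1 v = 0" using wg l a0 by auto
  have "rho (a0 + b) (W_bracket_poly a0 [:0,1:] b 1) v = 0" by (rule kill_close[OF hX b1])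
  then have "rho l (smult (of_int b ^ 2) 1 + smult (of_int (2 * b - a0)) [:0,1:]) v = 0"
    unfolding br_X1 b_def by simp
  then have "scale (of_int b ^ 2) (rho l 1 v) + scale (of_int (2 * b - a0)) (rho l [:0,1:] v) = 0"
    by (simp only: add_f smult_f)
  then have "scale (of_int (2 * b - a0)) (rho l [:0,1:] v) = 0" using l1 by simp
  moreover have "2 * b - a0 \<noteq> 0" using l b_def a0 k mult_nonneg_nonneg[of k k] by linarith
  ultimately show "rho l [:0,1:] v = 0" by (rule scale_int_cancel)
qed

end

definition Dset :: "(int \<Rightarrow> 'a::zero poly \<Rightarrow> 'v \<Rightarrow> 'v::zero) \<Rightarrow> int \<Rightarrow> 'v \<Rightarrow> nat set" where
  "Dset r l v = {n. \<exists>f. r l f v = 0 \<and> f \<noteq> 0 \<and> degree f = n}"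

primrec Aseq :: "int \<Rightarrow> nat \<Rightarrow> int" where
  "Aseq c 0 = c"
| "Aseq c (Suc r) = 3 * Aseq c r + 1"

lemma Lop_exact:
  fixes f :: "'a::field_char_0 poly"
  assumes "f \<noteq> 0" "degree f = n" "int (Suc n) * b - a \<noteq> 0"
  shows "Lop (of_int b) (of_int a) f \<noteq> 0 \<and> degree (Lop (of_int b) (of_int a) f) = n"
proof -
  have h: "degree (Lop (of_int b) (of_int a) f) \<le> n"
    "coeff (Lop (of_int b) (of_int a) f) n = (of_nat (Suc n) * of_int b - of_int a) * coeff f n"
    using Lop_deg[of f n "of_int b" "of_int a"] assms(2) by auto
  have e: "(of_nat (Suc n) * of_int b - of_int a :: 'a) = of_int (int (Suc n) * b - a)" by simp
  have ne1: "(of_nat (Suc n) * of_int b - of_int a :: 'a) \<noteq> 0"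
    unfolding e using assms(3) by (metis of_int_eq_0_iff)
  have ne2: "coeff f n \<noteq> 0" using assms(1,2) by (metis leading_coeff_0_iff)
  have c: "coeff (Lop (of_int b) (of_int a) f) n \<noteq> 0"
    unfolding h(2) using ne1 ne2 by simp
  then have "Lop (of_int b) (of_int a) f \<noteq> 0" by auto
  moreover have "degree (Lop (of_int b) (of_int a) f) = n" using h(1) c le_degree by (metis le_antisym)
  ultimately show ?thesis by simp
qed

context wmod begin

lemma all_from_D:
  assumes "\<And>n. n \<in> Dset rho l v"
  shows "rho l h v = 0"
proof (rule all_degrees[where P = "\<lambda>f. rho l f v = 0"])
  show "rho l 0 v = 0" by simp
  show "\<And>f g. rho l f v = 0 \<Longrightarrow> rho l g v = 0 \<Longrightarrow> rho l (f + g) v = 0" by (simp add: add_f)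
  show "\<And>c f. rho l f v = 0 \<Longrightarrow> rho l (smult c f) v = 0" by (simp add: smult_f)
  show "\<And>n. \<exists>f. rho l f v = 0 \<and> f \<noteq> 0 \<and> degree f = n" using assms unfolding Dset_def by blast
qed

lemma missing_finite:
  assumes v: "v \<in> Vg j"
  shows "finite (- Dset rho a v)"
proof -
  define Mis where "Mis = - Dset rho a v"
  define e where "e n = rho a (monom 1 n) v" for n
  obtain B where B: "finite B" "B \<subseteq> Vg (a + j)" "V.span B = Vg (a + j)" using fin by blast
  have K: "\<forall>n\<in>S. c n = 0" if S: "finite S" "S \<subseteq> Mis" and sum0: "(\<Sum>n\<in>S. scale (c n) (e n)) = 0" for S c
  proof -
    define p where "p = (\<Sum>n\<in>S. monom (c n) n)"
    have "rho a p v = (\<Sum>n\<in>S. rho a (monom (c n) n) v)" unfolding p_def by (rule rho_sum_f)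
    also have "\<dots> = (\<Sum>n\<in>S. scale (c n) (e n))" unfolding e_def
    proof (intro sum.cong refl)
      fix n show "rho a (monom (c n) n) v = scale (c n) (rho a (monom 1 n) v)"
        using smult_f[of a "c n" "monom 1 n" v] by (simp add: smult_monom)
    qed
    finally have rp: "rho a p v = 0" using sum0 by simp
    have cp: "coeff p m = (if m \<in> S then c m else 0)" for m
      unfolding p_def using S(1) by (simp add: coeff_sum coeff_monom)
    have "p = 0"
    proof (rule ccontr)
      assume pn: "p \<noteq> 0"
      then have "coeff p (degree p) \<noteq> 0" by simp
      then have "degree p \<in> S" using cp by metis
      then have "degree p \<in> Mis" using S by auto
      moreover have "degree p \<in> Dset rho a v" using rp pn unfolding Dset_def by blast
      ultimately show False unfolding Mis_def by simp
    qed
    then show ?thesis using cp by (metis coeff_0)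
  qed
  have inj: "inj_on e Mis"
  proof (rule inj_onI)
    fix n m assume nm: "n \<in> Mis" "m \<in> Mis" "e n = e m"
    show "n = m"
    proof (rule ccontr)
      assume ne: "n \<noteq> m"
      define c :: "nat \<Rightarrow> 'a" where "c i = (if i = n then 1 else -1)" for i
      have "(\<Sum>i\<in>{n,m}. scale (c i) (e i)) = 0"
        using ne nm(3) by (simp add: c_def V.scale_minus_left)
      then have "\<forall>i\<in>{n,m}. c i = 0" using K[of "{n,m}" c] nm by auto
      then show False by (simp add: c_def)
    qed
  qed
  have ind: "V.independent (e ` Mis)"
    unfolding V.independent_explicit_finite_subsets
  proof (intro allI impI ballI)
    fix S u w assume S: "S \<subseteq> e ` Mis" "finite S" and su: "(\<Sum>x\<in>S. scale (u x) x) = 0" and w: "w \<in> S"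
    obtain S' where S': "S' \<subseteq> Mis" "S = e ` S'" using S(1) by (auto simp: subset_image_iff)
    have injS: "inj_on e S'" using inj S'(1) by (rule inj_on_subset)
    have fS: "finite S'" using S(2) S'(2) injS by (simp add: finite_image_iff)
    have "(\<Sum>n\<in>S'. scale (u (e n)) (e n)) = 0"
      using su S'(2) sum.reindex[OF injS, of "\<lambda>x. scale (u x) x"] by simp
    then have "\<forall>n\<in>S'. u (e n) = 0" using K[of S' "\<lambda>n. u (e n)"] fS S'(1) by blast
    then show "u w = 0" using w S'(2) by auto
  qed
  have sp: "e ` Mis \<subseteq> V.span B" using B(3) grade[OF v] by (auto simp: e_def)
  have "finite (e ` Mis)" using V.independent_span_bound[OF B(1) ind sp] by simp
  then show ?thesis using inj unfolding Mis_def by (simp add: finite_image_iff)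
qed

lemma D_step:
  assumes v1: "rho b 1 v = 0" and vX: "rho b [:0,1:] v = 0" and ab: "b > 2 * a" "a \<ge> 1"
    and n: "n \<in> Dset rho a v"
  shows "n \<in> Dset rho (a + b) v \<and> Suc n \<in> Dset rho (a + b) v"
proof -
  obtain f where f: "rho a f v = 0" "f \<noteq> 0" "degree f = n" using n unfolding Dset_def by blast
  define L where "L = Lop (of_int b) (of_int a) f"
  have "1 * b \<le> int (Suc n) * b" by (rule mult_right_mono) (use ab in auto)
  then have bn: "int (Suc n) * b \<ge> b" by simp
  have rL: "rho (a + b) L v = 0" unfolding L_def using kill_close[OF f(1) v1] by (simp add: br_1)
  have ne: "int (Suc n) * b - a \<noteq> 0" using bn ab by linarith
  have Le: "L \<noteq> 0" "degree L = n" unfolding L_def using Lop_exact[OF f(2,3) ne] by auto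
  have D1: "n \<in> Dset rho (a + b) v" using rL Le unfolding Dset_def by blast
  define M where "M = pCons 0 L - smult (of_int a) ([:of_int a,1:] * f)"
  have rM: "rho (a + b) M v = 0" unfolding M_def L_def using kill_close[OF f(1) vX] by (simp add: br_X)
  have dM: "degree M \<le> Suc n"
  proof -
    have "degree (pCons 0 L) \<le> Suc n" using Le by (cases "L = 0") auto
    moreover have "degree ([:of_int a,1:] * f) \<le> Suc n"
      using degree_mult_le[of "[:of_int a,1:]" f] f(3) by simp
    ultimately show ?thesis unfolding M_def
      by (intro degree_diff_le) (auto intro: order_trans[OF degree_smult_le])
  qed
  have cf: "coeff f (Suc n) = 0" using f(3) by (simp add: coeff_eq_0)
  have cL: "coeff L n = (of_nat (Suc n) * of_int b - of_int a) * coeff f n"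
    unfolding L_def using Lop_deg[of f n "of_int b" "of_int a"] f(3) by auto
  have "coeff M (Suc n) = coeff L n - of_int a * (of_int a * coeff f (Suc n) + coeff f n)"
    unfolding M_def lin_mult by simp
  also have "\<dots> = of_int (int (Suc n) * b - 2 * a) * coeff f n"
    using cf cL by (simp add: algebra_simps)
  finally have cM: "coeff M (Suc n) = of_int (int (Suc n) * b - 2 * a) * coeff f n" .
  have "int (Suc n) * b - 2 * a \<noteq> 0" using bn ab by linarith
  then have i0: "(of_int (int (Suc n) * b - 2 * a) :: 'a) \<noteq> 0" by (metis of_int_eq_0_iff)
  have fn: "coeff f n \<noteq> 0" using f(2,3) by (metis leading_coeff_0_iff)
  have cM0: "coeff M (Suc n) \<noteq> 0" unfolding cM using i0 fn by (metis mult_eq_0_iff)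
  then have "M \<noteq> 0" by auto
  moreover have "degree M = Suc n" using dM cM0 le_degree by (metis le_antisym)
  ultimately have "Suc n \<in> Dset rho (a + b) v" using rM unfolding Dset_def by blast
  with D1 show ?thesis by simp
qed

end

context wmod begin

lemma gen_full:
  assumes k: "k \<ge> 1" and a0: "a0 = k \<or> a0 = k + 1" and v: "v \<in> Vg j"
    and h1: "rho k 1 v = 0" and h2: "rho (k + 1) 1 v = 0" and hX: "rho a0 [:0,1:] v = 0"
  shows "\<exists>N. \<forall>l\<ge>N. \<forall>f. rho l f v = 0"
proof -
  define B where "B = k * k + k + 1"
  have kk: "k * k \<ge> 0" by simp
  have a01: "a0 \<ge> 1" using a0 k by auto
  have wg: "\<forall>l\<ge>B. rho l 1 v = 0" unfolding B_def by (rule witt_gen[OF k h1 h2])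
  define B2 where "B2 = 2 * a0 + k * k + k + 2"
  have xg: "\<forall>l\<ge>B2. rho l [:0,1:] v = 0" unfolding B2_def
    by (rule X_gen[OF k a01 wg[unfolded B_def] hX])
  have BB2: "B \<le> B2" "1 \<le> B2" unfolding B_def B2_def using a01 kk k by linarith+
  have low: "0 \<in> Dset rho l v \<and> 1 \<in> Dset rho l v" if l: "l \<ge> B2" for l
  proof -
    have r1: "rho l 1 v = 0" using wg l BB2 by auto
    have r2: "rho l [:0,1:] v = 0" using xg l by auto
    have "0 \<in> Dset rho l v" unfolding Dset_def using r1 by (intro CollectI exI[of _ 1]) simp
    moreover have "1 \<in> Dset rho l v" unfolding Dset_def using r2 by (intro CollectI exI[of _ "[:0,1:]"]) simp
    ultimately show ?thesis by simp
  qed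
  have Age: "Aseq B2 r \<ge> B2" for r by (induction r) (use BB2 in auto)
  have stepD: "n \<in> Dset rho (Aseq B2 (Suc r)) v \<and> Suc n \<in> Dset rho (Aseq B2 (Suc r)) v"
    if n: "n \<in> Dset rho (Aseq B2 r) v" for n r
  proof -
    define a where "a = Aseq B2 r"
    define b where "b = 2 * a + 1"
    have a: "a \<ge> B2" unfolding a_def by (rule Age)
    have "rho b 1 v = 0" using wg a BB2 b_def by auto
    moreover have "rho b [:0,1:] v = 0" using xg a BB2 b_def by auto
    moreover have "b > 2 * a" "a \<ge> 1" using a BB2 b_def by auto
    ultimately have "n \<in> Dset rho (a + b) v \<and> Suc n \<in> Dset rho (a + b) v"
      using D_step n unfolding a_def by blast
    moreover have "a + b = Aseq B2 (Suc r)" unfolding a_def b_def by simp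
    ultimately show ?thesis by simp
  qed
  have claim: "n \<notin> Dset rho (Aseq B2 r) v \<Longrightarrow> r \<le> n \<and> n \<notin> Dset rho B2 v" for n r
  proof (induction r arbitrary: n)
    case 0 then show ?case by simp
  next
    case (Suc r)
    have n1: "n \<notin> Dset rho (Aseq B2 r) v" using stepD Suc.prems by blast
    have "n \<noteq> 0"
    proof
      assume "n = 0"
      then show False using Suc.prems low[OF Age[of "Suc r"]] by blast
    qed
    then obtain m where m: "n = Suc m" by (cases n) auto
    have "m \<notin> Dset rho (Aseq B2 r) v" using stepD[of m r] Suc.prems m by blast
    then have "r \<le> m" using Suc.IH by blast
    moreover have "n \<notin> Dset rho B2 v" using Suc.IH[OF n1] by blast
    ultimately show ?case using m by simp
  qed
  obtain M where M: "\<forall>n\<in>- Dset rho B2 v. n < M"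
    using missing_finite[OF v, of B2] finite_nat_set_iff_bounded by blast
  define as where "as = Aseq B2 M"
  have allD: "n \<in> Dset rho as v" for n
  proof (rule ccontr)
    assume "n \<notin> Dset rho as v"
    then have "M \<le> n \<and> n \<notin> Dset rho B2 v" using claim unfolding as_def by blast
    then have "n \<in> - Dset rho B2 v" "M \<le> n" by auto
    then show False using M by (meson leD)
  qed
  have allf: "rho as f v = 0" for f by (rule all_from_D[OF allD])
  have as1: "as \<ge> 1" using Age[of M] BB2 unfolding as_def by auto
  show ?thesis
  proof (intro exI[of _ "2 * as + B + 1"] allI impI)
    fix l f assume l: "2 * as + B + 1 \<le> l"
    define b where "b = l - as"
    have b1: "rho b 1 v = 0" using wg l b_def as1 by auto
    have allDl: "n \<in> Dset rho l v" for n
    proof -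
      define g :: "'a poly" where "g = monom 1 n"
      have g: "g \<noteq> 0" "degree g = n" unfolding g_def by (auto simp: degree_monom_eq)
      have B1: "B \<ge> 1" unfolding B_def using kk k by linarith
      have b0: "b \<ge> 0" using l b_def as1 B1 by linarith
      have "1 * b \<le> int (Suc n) * b" by (rule mult_right_mono) (use b0 in auto)
      then have "int (Suc n) * b \<ge> b" by simp
      then have ne: "int (Suc n) * b - as \<noteq> 0" using l b_def as1 B1 by linarith
      have "rho (as + b) (W_bracket_poly as g b 1) v = 0" by (rule kill_close[OF allf b1])
      then have "rho l (Lop (of_int b) (of_int as) g) v = 0" unfolding br_1 b_def by simp
      then show ?thesis using Lop_exact[OF g ne] unfolding Dset_def by blast
    qed
    show "rho l f v = 0" by (rule all_from_D[OF allDl])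
  qed
qed

end

definition papply :: "('a::zero \<Rightarrow> 'v \<Rightarrow> 'v) \<Rightarrow> ('v \<Rightarrow> 'v) \<Rightarrow> 'a poly \<Rightarrow> 'v \<Rightarrow> 'v::comm_monoid_add" where
  "papply sc T p u = (\<Sum>i\<le>degree p. sc (coeff p i) ((T ^^ i) u))"

context wmod begin

context
  fixes T :: "'v \<Rightarrow> 'v"
  assumes T: "module_hom scale scale T"
begin

lemma T_add: "T (x + y) = T x + T y" using module_hom.add[OF T] .
lemma T_scale: "T (scale c x) = scale c (T x)" using module_hom.scale[OF T] .

lemma pw_add: "(T ^^ i) (x + y) = (T ^^ i) x + (T ^^ i) y"
  by (induction i) (auto simp: T_add)

lemma pw_scale: "(T ^^ i) (scale c x) = scale c ((T ^^ i) x)"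
  by (induction i) (auto simp: T_scale)

lemma pa_ext:
  assumes "degree p \<le> N"
  shows "papply scale T p u = (\<Sum>i\<le>N. scale (coeff p i) ((T ^^ i) u))"
  unfolding papply_def
proof (rule sum.mono_neutral_left)
  show "finite {..N}" by simp
  show "{..degree p} \<subseteq> {..N}" using assms by auto
  show "\<forall>i\<in>{..N} - {..degree p}. scale (coeff p i) ((T ^^ i) u) = 0"
    by (auto simp: coeff_eq_0)
qed

lemma pa_add: "papply scale T (p + q) u = papply scale T p u + papply scale T q u"
proof -
  define N where "N = max (degree p) (degree q)"
  have d: "degree p \<le> N" "degree q \<le> N" "degree (p + q) \<le> N"
    unfolding N_def by (auto intro: degree_add_le)
  show ?thesis unfolding pa_ext[OF d(1)] pa_ext[OF d(2)] pa_ext[OF d(3)]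
    by (simp add: V.scale_left_distrib sum.distrib)
qed

lemma pa_smult: "papply scale T (smult c p) u = scale c (papply scale T p u)"
proof -
  have d: "degree (smult c p) \<le> degree p" by (rule degree_smult_le)
  show ?thesis unfolding pa_ext[OF d] papply_def
    by (simp add: V.scale_sum_right)
qed

lemma pa_zero[simp]: "papply scale T 0 u = 0"
  by (simp add: papply_def)

lemma pa_diff: "papply scale T (p - q) u = papply scale T p u - papply scale T q u"
proof -
  have "p - q = p + smult (-1) q" by simp
  then show ?thesis by (simp only: pa_add pa_smult) (simp add: V.scale_minus_left)
qed

lemma pa_pCons0: "papply scale T (pCons 0 q) u = papply scale T q (T u)"
proof -
  have d: "degree (pCons 0 q) \<le> Suc (degree q)" by (cases "q = 0") auto
  have "papply scale T (pCons 0 q) u = (\<Sum>i\<le>Suc (degree q). scale (coeff (pCons 0 q) i) ((T ^^ i) u))"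
    by (rule pa_ext[OF d])
  also have "\<dots> = (\<Sum>i\<le>degree q. scale (coeff q i) ((T ^^ Suc i) u))"
    by (subst sum.atMost_Suc_shift) simp
  also have "\<dots> = papply scale T q (T u)"
    unfolding papply_def by (simp add: funpow_Suc_right del: funpow.simps)
  finally show ?thesis .
qed

lemma pa_const: "papply scale T [:c:] u = scale c u"
  by (simp add: papply_def)

lemma pa_monom: "papply scale T (monom 1 n) u = (T ^^ n) u"
proof -
  have d: "degree (monom (1::'a) n) \<le> n" by (simp add: degree_monom_le)
  have "papply scale T (monom 1 n) u = (\<Sum>i\<le>n. scale (coeff (monom 1 n) i) ((T ^^ i) u))"
    by (rule pa_ext[OF d])
  also have "\<dots> = (\<Sum>i\<le>n. if n = i then (T ^^ i) u else 0)"
    by (intro sum.cong refl) (simp add: coeff_monom)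
  also have "\<dots> = (T ^^ n) u" by (simp add: sum.delta)
  finally show ?thesis .
qed

lemma pa_sum: "papply scale T (sum F S) u = (\<Sum>x\<in>S. papply scale T (F x) u)"
  by (induction S rule: infinite_finite_induct) (auto simp: pa_add)

lemma pa_add_u: "papply scale T p (x + y) = papply scale T p x + papply scale T p y"
  unfolding papply_def by (simp add: pw_add V.scale_right_distrib sum.distrib)

lemma pa_scale_u: "papply scale T p (scale c x) = scale c (papply scale T p x)"
  unfolding papply_def by (simp add: pw_scale V.scale_sum_right mult.commute)

lemma pa_lin_mult:
  "papply scale T ([:- r, 1:] * q) u = papply scale T q (T u - scale r u)"
proof -
  have "[:- r, 1:] * q = smult (- r) q + pCons 0 q" by (rule lin_mult)
  then have "papply scale T ([:- r, 1:] * q) u = scale (- r) (papply scale T q u) + papply scale T q (T u)"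
    by (simp only: pa_add pa_smult pa_pCons0)
  also have "\<dots> = papply scale T q (T u + scale (- r) u)"
    by (simp only: pa_add_u pa_scale_u add.commute)
  also have "T u + scale (- r) u = T u - scale r u" by (simp add: V.scale_minus_left)
  finally show ?thesis .
qed

lemma eigen_peel:
  assumes U: "V.subspace U" "T ` U \<subseteq> U"
  shows "p \<noteq> 0 \<Longrightarrow> u \<in> U \<Longrightarrow> u \<noteq> 0 \<Longrightarrow> papply scale T p u = 0 \<Longrightarrow>
    \<exists>w\<in>U. w \<noteq> 0 \<and> (\<exists>r. T w = scale r w)"
proof (induction "degree p" arbitrary: p u rule: less_induct)
  case less
  show ?case
  proof (cases "degree p = 0")
    case True
    then obtain c where p: "p = [:c:]" by (metis degree_eq_zeroE)
    then have "c \<noteq> 0" using less.prems by auto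
    moreover have "scale c u = 0" using less.prems p by (simp add: pa_const)
    ultimately show ?thesis using less.prems by simp
  next
    case False
    then obtain r where "poly p r = 0" using alg_closed_imp_poly_has_root by blast
    then have "[:- r, 1:] dvd p" by (simp add: poly_eq_0_iff_dvd)
    then obtain q where pq: "p = [:- r, 1:] * q" by (rule dvdE)
    have q0: "q \<noteq> 0" using pq less.prems by auto
    have dm: "degree ([:- r, 1:] * q) = degree [:- r, 1:] + degree q" by (rule degree_mult_eq) (use q0 in auto)
    have d1: "degree [:- r, 1:] = (1::nat)" by simp
    have "degree p = 1 + degree q" using dm d1 pq by metis
    then have dq: "degree q < degree p" by simp
    define w where "w = T u - scale r u"
    have wU: "w \<in> U" unfolding w_def using U less.prems
      by (auto intro!: V.subspace_diff V.subspace_scale)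
    have pw: "papply scale T q w = 0" using less.prems pq pa_lin_mult unfolding w_def by simp
    show ?thesis
    proof (cases "w = 0")
      case True
      then have "T u = scale r u" unfolding w_def by simp
      then show ?thesis using less.prems by blast
    next
      case False
      show ?thesis by (rule less.hyps[OF dq q0 wU False pw])
    qed
  qed
qed

lemma span_idx:
  fixes w :: "nat \<Rightarrow> 'v"
  shows "x \<in> V.span (w ` {..<n}) \<Longrightarrow> \<exists>c. x = (\<Sum>i<n. scale (c i) (w i))"
proof (induction n arbitrary: x)
  case 0 then show ?case by simp
next
  case (Suc n)
  have "w ` {..<Suc n} = insert (w n) (w ` {..<n})" by (simp add: lessThan_Suc)
  then obtain k where k: "x - scale k (w n) \<in> V.span (w ` {..<n})"
    using Suc.prems V.span_breakdown_eq by auto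
  obtain c where c: "x - scale k (w n) = (\<Sum>i<n. scale (c i) (w i))" using Suc.IH[OF k] by blast
  define c' where "c' = c(n := k)"
  have "(\<Sum>i<Suc n. scale (c' i) (w i)) = (\<Sum>i<n. scale (c i) (w i)) + scale k (w n)"
    by (simp add: c'_def)
  also have "\<dots> = x" using c by (simp add: algebra_simps)
  finally show ?case by metis
qed

lemma poly_kill:
  assumes U: "V.subspace U" "T ` U \<subseteq> U" "U \<subseteq> V.span B" "finite B" and u0: "u0 \<in> U"
  shows "\<exists>p. p \<noteq> 0 \<and> papply scale T p u0 = 0"
proof -
  define w where "w i = (T ^^ i) u0" for i
  have wU: "w i \<in> U" for i
  proof (induction i)
    case 0 then show ?case using u0 by (simp add: w_def)
  next
    case (Suc i) then show ?case using U(2) by (auto simp: w_def)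
  qed
  have "\<exists>n. w n \<in> V.span (w ` {..<n})"
  proof (rule ccontr)
    assume none: "\<not> ?thesis"
    have ind: "V.independent (w ` {..<m}) \<and> inj_on w {..<m}" for m
    proof (induction m)
      case 0 show ?case using V.independent_empty by simp
    next
      case (Suc m)
      have e: "w ` {..<Suc m} = insert (w m) (w ` {..<m})" by (simp add: lessThan_Suc)
      have nm: "w m \<notin> V.span (w ` {..<m})" using none by blast
      have "w m \<notin> w ` {..<m}"
      proof
        assume "w m \<in> w ` {..<m}"
        then have "w m \<in> V.span (w ` {..<m})" by (rule V.span_base)
        with nm show False by simp
      qed
      moreover have "V.independent (insert (w m) (w ` {..<m}))"
        using V.independent_insertI[OF nm] Suc.IH by blast
      moreover have "inj_on w {..<Suc m}" unfolding lessThan_Suc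
        using Suc.IH \<open>w m \<notin> w ` {..<m}\<close> by (simp add: inj_on_insert)
      ultimately show ?case unfolding e by blast
    qed
    have sub: "w ` {..<Suc (card B)} \<subseteq> V.span B" using wU U by blast
    have "card (w ` {..<Suc (card B)}) \<le> card B"
      using V.independent_span_bound[OF U(4) _ sub] ind by blast
    moreover have "card (w ` {..<Suc (card B)}) = Suc (card B)"
      using ind by (simp add: card_image)
    ultimately show False by simp
  qed
  then obtain n where n: "w n \<in> V.span (w ` {..<n})" by blast
  obtain c where c: "w n = (\<Sum>i<n. scale (c i) (w i))" using span_idx[OF n] by blast
  define p where "p = monom 1 n - (\<Sum>i<n. monom (c i) i)"
  have "coeff p n = 1" unfolding p_def by (simp add: coeff_sum coeff_monom)
  then have "p \<noteq> 0" by auto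
  moreover have "papply scale T p u0 = 0"
  proof -
    have "papply scale T p u0 = w n - (\<Sum>i<n. papply scale T (monom (c i) i) u0)"
      unfolding p_def pa_diff pa_sum pa_monom w_def ..
    also have "(\<Sum>i<n. papply scale T (monom (c i) i) u0) = (\<Sum>i<n. scale (c i) (w i))"
    proof (intro sum.cong refl)
      fix i
      have "monom (c i) i = smult (c i) (monom 1 i)" by (simp add: smult_monom)
      then show "papply scale T (monom (c i) i) u0 = scale (c i) (w i)"
        by (simp only: pa_smult pa_monom w_def)
    qed
    finally show ?thesis using c by (metis diff_self)
  qed
  ultimately show ?thesis by blast
qed

lemma eigen_exists:
  assumes U: "V.subspace U" "T ` U \<subseteq> U" "U \<subseteq> V.span B" "finite B" and u0: "u0 \<in> U" "u0 \<noteq> 0"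
  shows "\<exists>w\<in>U. w \<noteq> 0 \<and> (\<exists>r. T w = scale r w)"
  using poly_kill[OF U u0(1)] eigen_peel[OF U(1,2) _ u0] by blast

end

lemma dim_strict:
  assumes "V.subspace E" "V.subspace U" "E \<subseteq> U" "E \<noteq> U" "U \<subseteq> V.span B" "finite B"
  shows "V.dim E < V.dim U"
proof -
  obtain C where C: "C \<subseteq> E" "V.independent C" "E \<subseteq> V.span C" "card C = V.dim E"
    by (rule V.basis_exists)
  obtain D where D: "C \<subseteq> D" "D \<subseteq> U" "V.independent D" "U \<subseteq> V.span D"
    using V.maximal_independent_subset_extend[of C U] C assms(3) by blast
  have fD: "finite D" using V.independent_span_bound[OF assms(6) D(3)] D(2) assms(5) by blast
  have cD: "card D = V.dim U" using V.basis_card_eq_dim[OF D(2) D(4) D(3)] .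
  have "C \<noteq> D"
  proof
    assume "C = D"
    then have "U \<subseteq> E" using D(4) V.span_minimal[OF C(1) assms(1)] by blast
    then show False using assms(3,4) by blast
  qed
  then have "card C < card D" using D(1) fD by (simp add: psubset_card_mono)
  then show ?thesis using C(4) cD by simp
qed

lemma common_eigen:
  fixes A :: "'b \<Rightarrow> 'v \<Rightarrow> 'v"
  assumes hom: "\<And>f. module_hom scale scale (A f)"
    and comm: "\<And>f g x. A f (A g x) = A g (A f x)"
    and B: "finite B"
  shows "V.subspace U \<Longrightarrow> U \<subseteq> V.span B \<Longrightarrow> (\<forall>f. A f ` U \<subseteq> U) \<Longrightarrow> U \<noteq> {0} \<Longrightarrow>
    \<exists>u\<in>U. u \<noteq> 0 \<and> (\<forall>f. \<exists>c. A f u = scale c u)"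
proof (induction "V.dim U" arbitrary: U rule: less_induct)
  case less
  obtain u0 where u0: "u0 \<in> U" "u0 \<noteq> 0" using less.prems V.subspace_0 by blast
  show ?case
  proof (cases "\<forall>f. \<exists>c. \<forall>x\<in>U. A f x = scale c x")
    case True
    then show ?thesis using u0 by blast
  next
    case False
    then obtain f where nf: "\<not> (\<exists>c. \<forall>x\<in>U. A f x = scale c x)" by blast
    obtain u1 r where u1: "u1 \<in> U" "u1 \<noteq> 0" "A f u1 = scale r u1"
      using eigen_exists[OF hom less.prems(1) _ less.prems(2) B u0] less.prems(3) by blast
    define E where "E = {x \<in> U. A f x = scale r x}"
    have Es: "V.subspace E" unfolding E_def V.subspace_def
      using less.prems(1) module_hom.add[OF hom] module_hom.scale[OF hom]
      by (auto simp: V.subspace_add V.subspace_scale V.subspace_0 V.scale_right_distrib mult.commute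
          module_hom.zero[OF hom])
    have EU: "E \<subseteq> U" unfolding E_def by auto
    have EneU: "E \<noteq> U" using nf unfolding E_def by blast
    have Estab: "\<forall>g. A g ` E \<subseteq> E"
    proof (intro allI subsetI)
      fix g y assume "y \<in> A g ` E"
      then obtain x where x: "x \<in> E" "y = A g x" by blast
      have "A f (A g x) = scale r (A g x)"
        using x comm[of f g x] module_hom.scale[OF hom] unfolding E_def by auto
      then show "y \<in> E" using x less.prems(3) unfolding E_def by auto
    qed
    have E0: "E \<noteq> {0}" using u1 unfolding E_def by auto
    have "V.dim E < V.dim U" by (rule dim_strict[OF Es less.prems(1) EU EneU less.prems(2) B])
    then obtain u where "u \<in> E" "u \<noteq> 0" "\<forall>g. \<exists>c. A g u = scale c u"
      using less.hyps[of E] Es EU less.prems(2) Estab E0 by blast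
    then show ?thesis using EU by blast
  qed
qed

end

locale wmod2 = wmod +
  assumes irr: "W_irreducible scale rho"
    and noh: "\<not> (\<exists>v. highest_weight_vector scale rho Vg v)"
begin

lemma Vp_univ:
  assumes v: "v \<noteq> 0" "\<forall>l\<ge>N. \<forall>f. rho l f v = 0"
  shows "\<exists>N. \<forall>l\<ge>N. \<forall>f. rho l f u = 0"
proof -
  define U where "U = {u. \<exists>N. \<forall>l\<ge>N. \<forall>f. rho l f u = 0}"
  have sU: "V.subspace U" unfolding V.subspace_def
  proof (intro conjI ballI allI)
    show "0 \<in> U" unfolding U_def by auto
  next
    fix x y assume "x \<in> U" "y \<in> U"
    then obtain N1 N2 where "\<forall>l\<ge>N1. \<forall>f. rho l f x = 0" "\<forall>l\<ge>N2. \<forall>f. rho l f y = 0"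
      unfolding U_def by blast
    then have "\<forall>l\<ge>max N1 N2. \<forall>f. rho l f (x + y) = 0" by (simp add: add_v)
    then show "x + y \<in> U" unfolding U_def by blast
  next
    fix c x assume "x \<in> U"
    then obtain N1 where "\<forall>l\<ge>N1. \<forall>f. rho l f x = 0" unfolding U_def by blast
    then have "\<forall>l\<ge>N1. \<forall>f. rho l f (scale c x) = 0" by (simp add: scale_v)
    then show "scale c x \<in> U" unfolding U_def by blast
  qed
  have cU: "\<forall>i f u. u \<in> U \<longrightarrow> rho i f u \<in> U"
  proof (intro allI impI)
    fix i f u assume "u \<in> U"
    then obtain N1 where N1: "\<forall>l\<ge>N1. \<forall>f. rho l f u = 0" unfolding U_def by blast
    have "\<forall>l\<ge>N1 + \<bar>i\<bar>. \<forall>g. rho l g (rho i f u) = 0"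
    proof (intro allI impI)
      fix l g assume l: "N1 + \<bar>i\<bar> \<le> l"
      have "rho l g u = 0" using N1 l by auto
      moreover have "rho (l + i) (W_bracket_poly l g i f) u = 0" using N1 l by auto
      ultimately show "rho l g (rho i f u) = 0" using brk'[of l g i f u] by simp
    qed
    then show "rho i f u \<in> U" unfolding U_def by blast
  qed
  have "v \<in> U" using v unfolding U_def by blast
  then have "U \<noteq> {0}" using v by auto
  then have "U = UNIV" using irr sU cU unfolding W_irreducible_def by blast
  then show ?thesis unfolding U_def by blast
qed

lemma uniform:
  assumes allV: "\<forall>u. \<exists>N. \<forall>l\<ge>N. \<forall>f. rho l f u = 0"
  shows "\<exists>N. \<forall>l\<ge>N. \<forall>f. \<forall>w\<in>Vg \<mu>. rho l f w = 0"
proof -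
  obtain B where B: "finite B" "B \<subseteq> Vg \<mu>" "V.span B = Vg \<mu>" using fin by blast
  obtain Nf where Nf: "\<forall>u l f. l \<ge> Nf u \<longrightarrow> rho l f u = 0" using allV by metis
  define N where "N = Max (insert 0 (Nf ` B))"
  have NB: "b \<in> B \<Longrightarrow> Nf b \<le> N" for b unfolding N_def using B(1) by auto
  show ?thesis
  proof (intro exI[of _ N] allI impI ballI)
    fix l f w assume l: "N \<le> l" and w: "w \<in> Vg \<mu>"
    have K: "V.subspace {x. rho l f x = 0}" using module_hom.subspace_kernel[OF hom] .
    have "B \<subseteq> {x. rho l f x = 0}" using Nf NB l by fastforce
    then have "V.span B \<subseteq> {x. rho l f x = 0}" using V.span_minimal K by blast
    then show "rho l f w = 0" using w B(3) by blast
  qed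
qed

lemma stuck:
  assumes t: "t \<in> Vg m" "t \<noteq> 0" "\<forall>l\<ge>1. \<forall>f. rho l f t = 0"
  shows False
proof -
  define S where "S = {u \<in> Vg m. \<forall>l\<ge>1. \<forall>f. rho l f u = 0}"
  obtain B where B: "finite B" "B \<subseteq> Vg m" "V.span B = Vg m" using fin by blast
  have sS: "V.subspace S" unfolding S_def V.subspace_def
    using sub[of m] by (auto simp: V.subspace_add V.subspace_scale V.subspace_0 add_v scale_v)
  have SB: "S \<subseteq> V.span B" unfolding S_def using B(3) by auto
  have hom0: "module_hom scale scale (rho 0 f)" for f by (rule hom)
  have comm: "rho 0 f (rho 0 g x) = rho 0 g (rho 0 f x)" for f g x
    using brk'[of 0 f 0 g x] by (simp add: br_00)
  have stab: "\<forall>f. rho 0 f ` S \<subseteq> S"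
  proof (intro allI subsetI)
    fix f y assume "y \<in> rho 0 f ` S"
    then obtain u where u: "u \<in> S" "y = rho 0 f u" by blast
    have "y \<in> Vg m" using u grade[of u m 0 f] unfolding S_def by auto
    moreover have "\<forall>l\<ge>1. \<forall>g. rho l g y = 0"
    proof (intro allI impI)
      fix l :: int and g assume l: "1 \<le> l"
      have "rho l g u = 0" "rho (l + 0) (W_bracket_poly l g 0 f) u = 0" using u l unfolding S_def by auto
      then show "rho l g y = 0" using brk'[of l g 0 f u] u by simp
    qed
    ultimately show "y \<in> S" unfolding S_def by blast
  qed
  have S0: "S \<noteq> {0}" using t unfolding S_def by auto
  obtain u where u: "u \<in> S" "u \<noteq> 0" "\<forall>f. \<exists>c. rho 0 f u = scale c u"
    using common_eigen[of "\<lambda>f. rho 0 f", OF hom0 comm B(1) sS SB stab S0] by blast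
  have "highest_weight_vector scale rho Vg u"
    unfolding highest_weight_vector_def using u unfolding S_def by auto
  then show False using noh by blast
qed

lemma criterion:
  assumes t: "t \<in> Vg m" "t \<noteq> 0" and q: "q \<ge> 1"
    and kt: "\<forall>p\<ge>q. rho p 1 t = 0" and kw: "\<forall>p\<ge>q. \<forall>w\<in>Vg (m - q). rho p 1 w = 0"
  shows False
proof -
  have all: "rho l h t = 0" if l: "l \<ge> 0" for l h
  proof -
    define p where "p = l + q"
    have kL: "rho l (Lop (of_int p) (of_int (l - p)) g) t = 0" for g
    proof -
      have "rho (l - p) g t \<in> Vg (l - p + m)" by (rule grade[OF t(1)])
      moreover have "l - p + m = m - q" unfolding p_def by simp
      ultimately have "rho p 1 (rho (l - p) g t) = 0" using kw p_def l by auto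
      moreover have "rho p 1 t = 0" using kt p_def l by auto
      ultimately have "rho (p + (l - p)) (W_bracket_poly p 1 (l - p) g) t = 0"
        using brk[of p 1 "l - p" g t] by simp
      then have "rho l (- Lop (of_int p) (of_int (l - p)) g) t = 0" by (simp add: br_1left)
      then show ?thesis by (simp add: rho_neg_f)
    qed
    have D: "n \<in> Dset rho l t" for n
    proof -
      define g :: "'a poly" where "g = monom 1 n"
      have g: "g \<noteq> 0" "degree g = n" unfolding g_def by (auto simp: degree_monom_eq)
      have p0: "p \<ge> 0" using l q p_def by simp
      have "1 * p \<le> int (Suc n) * p" by (rule mult_right_mono) (use p0 in auto)
      then have ne: "int (Suc n) * p - (l - p) \<noteq> 0" using p_def q l by linarith
      show ?thesis using Lop_exact[OF g ne] kL[of g] unfolding Dset_def by blast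
    qed
    show ?thesis by (rule all_from_D[OF D])
  qed
  have "highest_weight_vector scale rho Vg t"
    unfolding highest_weight_vector_def using t all
    by (auto intro!: exI[of _ 0] exI[of _ m])
  then show False using noh by blast
qed

lemma no_T:
  assumes v: "v \<in> Vg j" "v \<noteq> 0" and N: "\<forall>l\<ge>N. \<forall>f. rho l f v = 0"
  shows False
proof -
  have allV: "\<forall>u. \<exists>N. \<forall>l\<ge>N. \<forall>f. rho l f u = 0" using Vp_univ[OF v(2) N] by blast
  obtain N0 where N0: "\<forall>l\<ge>N0. \<forall>f. \<forall>w\<in>Vg j. rho l f w = 0" using uniform[OF allV] by blast
  have chain: "\<exists>t m. t \<in> Vg m \<and> t \<noteq> 0 \<and> m \<ge> j + int r \<and> (\<forall>l\<ge>N. \<forall>f. rho l f t = 0)" for r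
  proof (induction r)
    case 0 then show ?case using v N by auto
  next
    case (Suc r)
    then obtain t m where tm: "t \<in> Vg m" "t \<noteq> 0" "m \<ge> j + int r" "\<forall>l\<ge>N. \<forall>f. rho l f t = 0" by blast
    show ?case
    proof (cases "\<forall>l\<ge>1. \<forall>f. rho l f t = 0")
      case True then show ?thesis using stuck tm by blast
    next
      case False
      then obtain l f where lf: "l \<ge> 1" "rho l f t \<noteq> 0" by blast
      have "rho l f t \<in> Vg (l + m)" by (rule grade[OF tm(1)])
      moreover have "l + m \<ge> j + int (Suc r)" using lf tm by simp
      moreover have "\<forall>l'\<ge>N. \<forall>g. rho l' g (rho l f t) = 0"
      proof (intro allI impI)
        fix l' g assume l': "N \<le> l'"
        have "rho l' g t = 0" "rho (l' + l) (W_bracket_poly l' g l f) t = 0" using tm l' lf by auto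
        then show "rho l' g (rho l f t) = 0" using brk'[of l' g l f t] by simp
      qed
      ultimately show ?thesis using lf by blast
    qed
  qed
  obtain t m where tm: "t \<in> Vg m" "t \<noteq> 0" "m \<ge> j + int (nat (max N N0) + 1)"
    "\<forall>l\<ge>N. \<forall>f. rho l f t = 0" using chain by blast
  define q where "q = m - j"
  have nn: "int (nat (max N N0)) \<ge> max N N0" by (auto simp: max_def)
  have q: "q \<ge> 1" "q \<ge> N" "q \<ge> N0" using tm(3) nn unfolding q_def by linarith+
  show False
  proof (rule criterion[OF tm(1,2) q(1)])
    show "\<forall>p\<ge>q. rho p 1 t = 0" using tm(4) q by auto
    show "\<forall>p\<ge>q. \<forall>w\<in>Vg (m - q). rho p 1 w = 0" using N0 q unfolding q_def by auto
  qed
qed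

theorem core:
  assumes k: "k \<ge> 1" and a0: "a0 = k \<or> a0 = k + 1" and v: "v \<in> Vg j" "v \<noteq> 0"
    and h1: "rho k 1 v = 0" and h2: "rho (k + 1) 1 v = 0" and hX: "rho a0 [:0,1:] v = 0"
  shows False
proof -
  obtain N where "\<forall>l\<ge>N. \<forall>f. rho l f v = 0" using gen_full[OF k a0 v(1) h1 h2 hX] by blast
  then show False using no_T[OF v] by blast
qed

end

definition sig :: "'a::comm_ring_1 poly \<Rightarrow> 'a poly" where
  "sig f = - pcompose f [:0,-1:]"

lemma sig_sig: "sig (sig f) = f"
proof -
  have "pcompose [:0,-1:] [:0,-1::'a:] = [:0,1:]" by (simp add: pcompose_pCons)
  then show ?thesis unfolding sig_def
    by (simp add: pcompose_uminus pcompose_assoc[symmetric])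
qed

lemma sig_add: "sig (f + g) = sig f + sig g"
  unfolding sig_def by (simp add: pcompose_add)

lemma sig_smult: "sig (smult c f) = smult c (sig f)"
  unfolding sig_def by (simp add: pcompose_smult)

lemma sig_1: "sig 1 = -1"
  unfolding sig_def by (simp add: pcompose_1)

lemma sig_X: "sig [:0,1:] = [:0,1:]"
  unfolding sig_def by (simp add: pcompose_pCons)

lemma sig_br: "W_bracket_poly (-i) (sig f) (-j) (sig g) = sig (W_bracket_poly i f j (g :: 'a::comm_ring_1 poly))"
proof -
  have c1: "pcompose [:0,-1:] [:c,1:] = ([:-c,-1:] :: 'a poly)" for c by (simp add: pcompose_pCons)
  have c2: "pcompose [:c,1:] [:0,-1:] = ([:c,-1:] :: 'a poly)" for c by (simp add: pcompose_pCons)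
  have m: "[:-c,1:] = - ([:c,-1:] :: 'a poly)" for c by simp
  have c3: "pcompose [:0,-1:] [:- c,1:] = ([:c,-1:] :: 'a poly)" for c by (simp add: pcompose_pCons)
  show ?thesis
    unfolding W_bracket_poly_def sig_def pcompose_uminus pcompose_diff pcompose_mult
      pcompose_assoc[symmetric] c1 c2 of_int_minus minus_minus m
    by (simp add: algebra_simps c3)
qed

definition sc3 :: "('a \<Rightarrow> 'v \<Rightarrow> 'v) \<Rightarrow> 'a \<Rightarrow> ('v \<times> 'v \<times> 'v) \<Rightarrow> ('v \<times> 'v \<times> 'v)" where
  "sc3 s c p = (s c (fst p), s c (fst (snd p)), s c (snd (snd p)))"

context wmod begin

lemma vs3: "vector_space (sc3 scale)"
  unfolding vector_space_def module_def sc3_def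
  by (auto simp: V.scale_right_distrib V.scale_left_distrib)

lemma dim3:
  assumes inj: "inj_on (\<lambda>v. (T1 v, T2 v, T3 v)) (Vg j)"
    and h1: "module_hom scale scale T1" and h2: "module_hom scale scale T2" and h3: "module_hom scale scale T3"
    and m1: "T1 ` Vg j \<subseteq> Vg a" and m2: "T2 ` Vg j \<subseteq> Vg b" and m3: "T3 ` Vg j \<subseteq> Vg a"
  shows "V.dim (Vg j) \<le> 2 * V.dim (Vg a) + V.dim (Vg b)"
proof -
  interpret P: vector_space "sc3 scale" by (rule vs3)
  define Phi where "Phi v = (T1 v, T2 v, T3 v)" for v
  define i1 :: "'v \<Rightarrow> 'v \<times> 'v \<times> 'v" where "i1 x = (x, 0, 0)" for x
  define i2 :: "'v \<Rightarrow> 'v \<times> 'v \<times> 'v" where "i2 x = (0, x, 0)" for x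
  define i3 :: "'v \<Rightarrow> 'v \<times> 'v \<times> 'v" where "i3 x = (0, 0, x)" for x
  have hPhi: "module_hom scale (sc3 scale) Phi"
    unfolding module_hom_iff
    using V.module_axioms P.module_axioms module_hom.add[OF h1] module_hom.add[OF h2] module_hom.add[OF h3]
      module_hom.scale[OF h1] module_hom.scale[OF h2] module_hom.scale[OF h3] by (simp add: Phi_def sc3_def)
  have hi1: "module_hom scale (sc3 scale) i1" unfolding module_hom_iff
    using V.module_axioms P.module_axioms by (simp add: i1_def sc3_def)
  have hi2: "module_hom scale (sc3 scale) i2" unfolding module_hom_iff
    using V.module_axioms P.module_axioms by (simp add: i2_def sc3_def)
  have hi3: "module_hom scale (sc3 scale) i3" unfolding module_hom_iff
    using V.module_axioms P.module_axioms by (simp add: i3_def sc3_def)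
  have finb: "finite C" if "C \<subseteq> Vg m" "V.independent C" for C m
  proof -
    obtain B where B: "finite B" "B \<subseteq> Vg m" "V.span B = Vg m" using fin by blast
    show ?thesis using V.independent_span_bound[OF B(1) that(2)] that(1) B(3) by blast
  qed
  obtain BU where BU: "BU \<subseteq> Vg j" "V.independent BU" "Vg j \<subseteq> V.span BU" "card BU = V.dim (Vg j)"
    by (rule V.basis_exists)
  obtain BX where BX: "BX \<subseteq> Vg a" "V.independent BX" "Vg a \<subseteq> V.span BX" "card BX = V.dim (Vg a)"
    by (rule V.basis_exists)
  obtain BY where BY: "BY \<subseteq> Vg b" "V.independent BY" "Vg b \<subseteq> V.span BY" "card BY = V.dim (Vg b)"
    by (rule V.basis_exists)
  have fX: "finite BX" using finb BX by blast
  have fY: "finite BY" using finb BY by blast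
  have spU: "V.span BU = Vg j" using V.span_minimal[OF BU(1) sub] BU(3) by blast
  have injU: "inj_on Phi (V.span BU)" unfolding spU Phi_def by (rule inj)
  have indP: "P.independent (Phi ` BU)"
    by (rule module_hom.independent_injective_image[OF hPhi BU(2) injU])
  have cP: "card (Phi ` BU) = card BU"
    using inj_on_subset[OF injU V.span_superset] by (simp add: card_image)
  define E where "E = i1 ` BX \<union> i2 ` BY \<union> i3 ` BX"
  have fE: "finite E" unfolding E_def using fX fY by simp
  have cE: "card E \<le> card BX + card BY + card BX"
  proof -
    have "card E \<le> card (i1 ` BX \<union> i2 ` BY) + card (i3 ` BX)" unfolding E_def by (rule card_Un_le)
    also have "\<dots> \<le> card (i1 ` BX) + card (i2 ` BY) + card (i3 ` BX)" using card_Un_le by simp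
    also have "\<dots> \<le> card BX + card BY + card BX" by (intro add_mono card_image_le fX fY)
    finally show ?thesis .
  qed
  have sub: "Phi ` BU \<subseteq> P.span E"
  proof
    fix y assume "y \<in> Phi ` BU"
    then obtain u where u: "u \<in> BU" "y = Phi u" by blast
    have uj: "u \<in> Vg j" using u BU(1) by blast
    have s1: "i1 (T1 u) \<in> P.span E"
    proof -
      have "i1 (T1 u) \<in> i1 ` V.span BX" using m1 uj BX(3) by blast
      also have "\<dots> = P.span (i1 ` BX)" by (rule module_hom.span_image[OF hi1, symmetric])
      also have "\<dots> \<subseteq> P.span E" unfolding E_def by (rule P.span_mono) blast
      finally show ?thesis .
    qed
    have s2: "i2 (T2 u) \<in> P.span E"
    proof -
      have "i2 (T2 u) \<in> i2 ` V.span BY" using m2 uj BY(3) by blast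
      also have "\<dots> = P.span (i2 ` BY)" by (rule module_hom.span_image[OF hi2, symmetric])
      also have "\<dots> \<subseteq> P.span E" unfolding E_def by (rule P.span_mono) blast
      finally show ?thesis .
    qed
    have s3: "i3 (T3 u) \<in> P.span E"
    proof -
      have "i3 (T3 u) \<in> i3 ` V.span BX" using m3 uj BX(3) by blast
      also have "\<dots> = P.span (i3 ` BX)" by (rule module_hom.span_image[OF hi3, symmetric])
      also have "\<dots> \<subseteq> P.span E" unfolding E_def by (rule P.span_mono) blast
      finally show ?thesis .
    qed
    have "y = i1 (T1 u) + i2 (T2 u) + i3 (T3 u)" unfolding u Phi_def i1_def i2_def i3_def by simp
    then show "y \<in> P.span E" using s1 s2 s3 by (simp add: P.span_add)
  qed
  have "card (Phi ` BU) \<le> card E" using P.independent_span_bound[OF fE indP sub] by blast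
  then show ?thesis using cP cE BU(4) BX(4) BY(4) by simp
qed

end

lemma mk_wmod2:
  fixes scale :: "'a::{alg_closed_field, field_char_0} \<Rightarrow> 'v::ab_group_add \<Rightarrow> 'v"
  assumes "W_module scale rho" "\<forall>j. fin_dim_subspace scale (Vg j)"
    "\<forall>i j f v. v \<in> Vg j \<longrightarrow> rho i f v \<in> Vg (i + j)" "W_irreducible scale rho"
    "\<not> (\<exists>v. highest_weight_vector scale rho Vg v)"
  shows "wmod2 scale rho Vg"
  using assms unfolding W_module_def fin_dim_subspace_def wmod2_def wmod_def wmod2_axioms_def
  by auto

theorem lemma2p2:
  fixes scale :: "'a::{alg_closed_field, field_char_0} \<Rightarrow> 'v::ab_group_add \<Rightarrow> 'v"
    and rho :: "int \<Rightarrow> 'a poly \<Rightarrow> 'v \<Rightarrow> 'v"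
    and Vg :: "int \<Rightarrow> 'v set"
  assumes "W_module scale rho"
    and "quasifinite scale rho Vg"
    and "W_irreducible scale rho"
    and "\<not> (\<exists>v. highest_weight_vector scale rho Vg v)"
    and "\<not> (\<exists>v. lowest_weight_vector scale rho Vg v)"
  shows "(\<forall>i j. i \<noteq> 0 \<and> i \<noteq> -1 \<longrightarrow>
            inj_on (\<lambda>v. (rho i 1 v, rho (i + 1) 1 v, rho i [:0, 1:] v)) (Vg j))
       \<and> (\<forall>j. vector_space.dim scale (Vg j)
               \<le> 2 * vector_space.dim scale (Vg 0) + vector_space.dim scale (Vg 1))"
proof -
  have fd: "\<forall>j. fin_dim_subspace scale (Vg j)" and gr: "\<forall>i j f v. v \<in> Vg j \<longrightarrow> rho i f v \<in> Vg (i + j)"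
    using assms(2) unfolding quasifinite_def by auto
  interpret A: wmod2 scale rho Vg by (rule mk_wmod2[OF assms(1) fd gr assms(3) assms(4)])
  define rho' where "rho' i f = rho (-i) (sig f)" for i f
  define Vg' where "Vg' j = Vg (-j)" for j
  have rr: "rho' (-i) (sig f) = rho i f" for i f unfolding rho'_def by (simp add: sig_sig)
  have Wm': "W_module scale rho'"
    unfolding W_module_def
  proof (intro conjI allI)
    show "vector_space scale" by (rule A.vs)
    show "rho' i f (v + w) = rho' i f v + rho' i f w" for i f v w unfolding rho'_def by (rule A.add_v)
    show "rho' i f (scale c v) = scale c (rho' i f v)" for i f c v unfolding rho'_def by (rule A.scale_v)
    show "rho' i (f + g) v = rho' i f v + rho' i g v" for i f g v unfolding rho'_def by (simp add: sig_add A.add_f)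
    show "rho' i (smult c f) v = scale c (rho' i f v)" for i f c v unfolding rho'_def by (simp add: sig_smult A.smult_f)
    show "rho' i f (rho' j g v) - rho' j g (rho' i f v) = rho' (i + j) (W_bracket_poly i f j g) v" for i j f g v
    proof -
      have "rho' i f (rho' j g v) - rho' j g (rho' i f v) = rho (-i + -j) (W_bracket_poly (-i) (sig f) (-j) (sig g)) v"
        unfolding rho'_def by (rule A.brk)
      also have "\<dots> = rho' (i + j) (W_bracket_poly i f j g) v" unfolding rho'_def sig_br by simp
      finally show ?thesis .
    qed
  qed
  have fd': "\<forall>j. fin_dim_subspace scale (Vg' j)" using fd unfolding Vg'_def by auto
  have gr': "\<forall>i j f v. v \<in> Vg' j \<longrightarrow> rho' i f v \<in> Vg' (i + j)"
    unfolding Vg'_def rho'_def using gr by (metis minus_add_distrib)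
  have irr': "W_irreducible scale rho'"
    unfolding W_irreducible_def
  proof (intro conjI allI impI)
    show "\<exists>v::'v. v \<noteq> 0" using assms(3) unfolding W_irreducible_def by blast
    fix U assume U: "module.subspace scale U \<and> (\<forall>i f u. u \<in> U \<longrightarrow> rho' i f u \<in> U)"
    then have "\<forall>i f u. u \<in> U \<longrightarrow> rho i f u \<in> U" using rr by metis
    then show "U = {0} \<or> U = UNIV" using U assms(3) unfolding W_irreducible_def by blast
  qed
  have noh': "\<not> (\<exists>v. highest_weight_vector scale rho' Vg' v)"
  proof
    assume "\<exists>v. highest_weight_vector scale rho' Vg' v"
    then obtain v j where v: "v \<noteq> 0" "v \<in> Vg' j" "\<forall>f. \<exists>c. rho' 0 f v = scale c v"
      "\<forall>i f. i > 0 \<longrightarrow> rho' i f v = 0" unfolding highest_weight_vector_def by blast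
    have "lowest_weight_vector scale rho Vg v"
      unfolding lowest_weight_vector_def
    proof (intro conjI allI impI)
      show "v \<noteq> 0" by (rule v(1))
      show "\<exists>j. v \<in> Vg j" using v(2) unfolding Vg'_def by blast
      fix f
      obtain c where "rho' 0 (sig f) v = scale c v" using v(3) by blast
      then show "\<exists>c. rho 0 f v = scale c v" using rr[of 0 f] by auto
    next
      fix i f assume "i < (0::int)"
      then show "rho i f v = 0" using v(4) rr[of i f] by (metis neg_0_less_iff_less)
    qed
    then show False using assms(5) by blast
  qed
  interpret B: wmod2 scale rho' Vg' by (rule mk_wmod2[OF Wm' fd' gr' irr' noh'])
  have ker: "v = 0" if i: "i \<noteq> 0" "i \<noteq> -1" and v: "v \<in> Vg j" and
    k1: "rho i 1 v = 0" and k2: "rho (i + 1) 1 v = 0" and k3: "rho i [:0,1:] v = 0" for i j v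
  proof (rule ccontr)
    assume v0: "v \<noteq> 0"
    show False
    proof (cases "i \<ge> 1")
      case True
      show False by (rule A.core[OF True _ v v0 k1 k2 k3]) simp
    next
      case False
      define k where "k = - i - 1"
      have k: "k \<ge> 1" using False i unfolding k_def by simp
      have vB: "v \<in> Vg' (-j)" unfolding Vg'_def using v by simp
      have b1: "rho' k 1 v = 0" unfolding rho'_def k_def sig_1 using k2 by (simp add: A.rho_neg_f add.commute)
      have b2: "rho' (k + 1) 1 v = 0" unfolding rho'_def k_def sig_1 using k1 by (simp add: A.rho_neg_f)
      have b3: "rho' (k + 1) [:0,1:] v = 0" unfolding rho'_def k_def sig_X using k3 by simp
      show False by (rule B.core[OF k _ vB v0 b1 b2 b3]) simp
    qed
  qed
  have inj: "inj_on (\<lambda>v. (rho i 1 v, rho (i + 1) 1 v, rho i [:0, 1:] v)) (Vg j)"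
    if i: "i \<noteq> 0" "i \<noteq> -1" for i j
  proof (rule inj_onI)
    fix x y assume x: "x \<in> Vg j" and y: "y \<in> Vg j"
      and e: "(rho i 1 x, rho (i + 1) 1 x, rho i [:0, 1:] x) = (rho i 1 y, rho (i + 1) 1 y, rho i [:0, 1:] y)"
    have "x - y = 0"
    proof (rule ker[OF i])
      show "x - y \<in> Vg j" by (rule A.Vg_diff[OF x y])
      show "rho i 1 (x - y) = 0" using e by (simp add: A.rho_diff_v)
      show "rho (i + 1) 1 (x - y) = 0" using e by (simp add: A.rho_diff_v)
      show "rho i [:0,1:] (x - y) = 0" using e by (simp add: A.rho_diff_v)
    qed
    then show "x = y" by simp
  qed
  have dim: "vector_space.dim scale (Vg j) \<le> 2 * vector_space.dim scale (Vg 0) + vector_space.dim scale (Vg 1)" for j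
  proof (cases "j = 0 \<or> j = 1")
    case True then show ?thesis by auto
  next
    case False
    then have i: "-j \<noteq> 0" "-j \<noteq> -1" by auto
    show ?thesis
    proof (rule A.dim3[OF inj[OF i] A.hom A.hom A.hom])
      show "rho (- j) 1 ` Vg j \<subseteq> Vg 0" using A.grade[of _ j "-j" 1] by fastforce
      show "rho (- j + 1) 1 ` Vg j \<subseteq> Vg 1" using A.grade[of _ j "-j + 1" 1] by fastforce
      show "rho (- j) [:0,1:] ` Vg j \<subseteq> Vg 0" using A.grade[of _ j "-j" "[:0,1:]"] by fastforce
    qed
  qed
  show ?thesis using inj dim by blast
qed

end
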